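(* For every density matrix $\sigma''$ on $\mathcal{H}$ with largest eigenvalue $\alpha$, $$d(\sigma'')\ge \alpha^{-1}\big(1+R_g(\sigma'')\big).$$
   Context: $\mathcal{H}=\mathcal{H}_1\otimes\cdots\otimes\mathcal{H}_m$ is finite-dimensional. A positive semidefinite operator is separable if it is a nonnegative combination of tensor products of positive semidefinite operators on the $\mathcal{H}_k$; $\mathfrak{S}$ is the set of separable density matrices. For a density matrix $\sigma$, $d(\sigma):=\min \mathrm{Tr}(\Pi)/\mathrm{Tr}(\sigma\Pi)$ over separable positive semidefinite operators $\Pi$ with $\mathrm{Tr}(\sigma\Pi)>0$ and $0\le \Pi/\mathrm{Tr}(\sigma\Pi)\le I$. Global robustness: $R_g(\sigma)=\min\{t\ge0:\exists$ a density matrix $\varrho$ with $(\sigma+t\varrho)/(1+t)\in\mathfrak{S}\}$. *)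

theory Defs
  imports "Jordan_Normal_Form.Matrix" "Jordan_Normal_Form.Char_Poly"
begin

text \<open>Operators on the composite space H = H_1 (x) ... (x) H_m are represented as complex
  square matrices.  The local dimensions are given by the list ds (length m), and
  the composite dimension is prod_list ds.  The ordering on complex numbers is the
  one of HOL-Library Complex_Order (z \<ge> 0 iff z is real and nonnegative).\<close>

definition mtrace :: "complex mat \<Rightarrow> complex" where
  "mtrace A = (\<Sum>i<dim_row A. A $$ (i, i))"

definition kron :: "complex mat \<Rightarrow> complex mat \<Rightarrow> complex mat" where
  "kron A B = mat (dim_row A * dim_row B) (dim_col A * dim_col B)
     (\<lambda>(i, j). A $$ (i div dim_row B, j div dim_col B) * B $$ (i mod dim_row B, j mod dim_col B))"

fun tensor_list :: "complex mat list \<Rightarrow> complex mat" where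
  "tensor_list [] = 1\<^sub>m 1"
| "tensor_list (P # Ps) = kron P (tensor_list Ps)"

definition psd :: "nat \<Rightarrow> complex mat \<Rightarrow> bool" where
  "psd n A \<longleftrightarrow> A \<in> carrier_mat n n \<and> (\<forall>v \<in> carrier_vec n. (A *\<^sub>v v) \<bullet>c v \<ge> 0)"

definition total_dim :: "nat list \<Rightarrow> nat" where
  "total_dim ds = prod_list ds"

definition density :: "nat list \<Rightarrow> complex mat \<Rightarrow> bool" where
  "density ds A \<longleftrightarrow> psd (total_dim ds) A \<and> mtrace A = 1"

fun mat_sum :: "nat \<Rightarrow> nat \<Rightarrow> (nat \<Rightarrow> complex mat) \<Rightarrow> complex mat" where
  "mat_sum n 0 f = 0\<^sub>m n n"
| "mat_sum n (Suc N) f = mat_sum n N f + f N"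

definition separable :: "nat list \<Rightarrow> complex mat \<Rightarrow> bool" where
  "separable ds A \<longleftrightarrow>
     (\<exists>(N::nat) (c :: nat \<Rightarrow> real) (P :: nat \<Rightarrow> nat \<Rightarrow> complex mat).
        (\<forall>j<N. c j \<ge> 0 \<and> (\<forall>k<length ds. psd (ds ! k) (P j k))) \<and>
        A = mat_sum (total_dim ds) N
              (\<lambda>j. complex_of_real (c j) \<cdot>\<^sub>m tensor_list (map (P j) [0..<length ds])))"

definition sep_density :: "nat list \<Rightarrow> complex mat \<Rightarrow> bool" where
  "sep_density ds A \<longleftrightarrow> density ds A \<and> separable ds A"

definition d_val :: "nat list \<Rightarrow> complex mat \<Rightarrow> real" where
  "d_val ds \<sigma> = Inf {Re (mtrace Pm) / Re (mtrace (\<sigma> * Pm)) | Pm.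
      psd (total_dim ds) Pm \<and> separable ds Pm \<and> Re (mtrace (\<sigma> * Pm)) > 0 \<and>
      psd (total_dim ds) ((1 / mtrace (\<sigma> * Pm)) \<cdot>\<^sub>m Pm) \<and>
      psd (total_dim ds) (1\<^sub>m (total_dim ds) - (1 / mtrace (\<sigma> * Pm)) \<cdot>\<^sub>m Pm)}"

definition global_robustness :: "nat list \<Rightarrow> complex mat \<Rightarrow> real" where
  "global_robustness ds \<sigma> = Inf {t. t \<ge> 0 \<and> (\<exists>\<rho>. density ds \<rho> \<and>
      sep_density ds ((1 / complex_of_real (1 + t)) \<cdot>\<^sub>m (\<sigma> + complex_of_real t \<cdot>\<^sub>m \<rho>)))}"

end

theory Submission
  imports Defs "Jordan_Normal_Form.Spectral_Radius" "Jordan_Normal_Form.Schur_Decomposition"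
begin


definition adj :: "complex mat \<Rightarrow> complex mat" where
  "adj A = mat (dim_col A) (dim_row A) (\<lambda>(i,j). cnj (A $$ (j,i)))"

lemma adj_dims[simp]: "dim_row (adj A) = dim_col A" "dim_col (adj A) = dim_row A"
  by (auto simp: adj_def)

lemma adj_index[simp]: "i < dim_col A \<Longrightarrow> j < dim_row A \<Longrightarrow> adj A $$ (i,j) = cnj (A $$ (j,i))"
  by (auto simp: adj_def)

lemma adj_carrier[simp]: "A \<in> carrier_mat n m \<Longrightarrow> adj A \<in> carrier_mat m n"
  unfolding carrier_mat_def by simp

lemma adj_adj[simp]: "adj (adj A) = A"
  by (rule eq_matI, auto)

lemma adj_mult: assumes "A \<in> carrier_mat n m" "B \<in> carrier_mat m k"
  shows "adj (A * B) = adj B * adj A"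
  using assms by (intro eq_matI) (auto simp: scalar_prod_def mult.commute)

lemma adj_one[simp]: "adj (1\<^sub>m n) = 1\<^sub>m n"
  by (rule eq_matI, auto)

lemma unitary_right: assumes U: "U \<in> carrier_mat n n" and "adj U * U = 1\<^sub>m n"
  shows "U * adj U = 1\<^sub>m n"
  using mat_mult_left_right_inverse[OF adj_carrier[OF U] U assms(2)] .

lemma adj_mult_index: assumes "W \<in> carrier_mat n m" "i < m" "j < m"
  shows "(adj W * W) $$ (i,j) = col W j \<bullet>c col W i"
  using assms by (auto simp: scalar_prod_def mult.commute)

lemma cscalar_self_real: "v \<bullet>c v = complex_of_real (Re (v \<bullet>c v))" "Re (v \<bullet>c v) \<ge> 0"
proof -
  have "v \<bullet>c v \<ge> 0" by auto
  then show "v \<bullet>c v = complex_of_real (Re (v \<bullet>c v))" "Re (v \<bullet>c v) \<ge> 0"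
    by (auto simp: less_eq_complex_def complex_eq_iff)
qed

lemma unitary_ext:
  assumes v: "v \<in> carrier_vec n" and v0: "v \<noteq> 0\<^sub>v n"
  shows "\<exists>W c. W \<in> carrier_mat n n \<and> adj W * W = 1\<^sub>m n \<and> col W 0 = c \<cdot>\<^sub>v v"
proof -
  interpret cof_vec_space n "TYPE(complex)" .
  define b where "b = basis_completion v"
  from basis_completion[OF v v0, folded b_def]
  have dist_b: "distinct b" 
    and indep: "\<not> lin_dep (set b)" and b: "set b \<subseteq> carrier_vec n" and hdb: "hd b = v" 
    and len_b: "length b = n" by auto
  have n: "n > 0" using v0 v by (cases n, auto)
  from hdb len_b n obtain vs where bv: "b = v # vs" by (cases b, auto)
  define ws where "ws = gram_schmidt n b"
  from gram_schmidt_result[OF b dist_b indep ws_def]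
  have ws: "set ws \<subseteq> carrier_vec n" "corthogonal ws" "length ws = n" 
    by (auto simp: len_b)
  have hdws: "hd ws = v" unfolding ws_def bv using v by simp
  define nf where "nf w = (1 / complex_of_real (sqrt (Re (w \<bullet>c w))))" for w :: "complex vec"
  define ws' where "ws' = map (\<lambda>w. nf w \<cdot>\<^sub>v w) ws"
  define W where "W = mat_of_cols n ws'"
  have ws'c: "set ws' \<subseteq> carrier_vec n" using ws unfolding ws'_def by auto
  have len': "length ws' = n" using ws unfolding ws'_def by auto
  have W: "W \<in> carrier_mat n n" unfolding W_def using len' by auto
  have colW: "col W j = nf (ws ! j) \<cdot>\<^sub>v ws ! j" if "j < n" for j
  proof -
    have "ws' ! j \<in> carrier_vec n" using ws'c that len' nth_mem by blast
    then have "col W j = ws' ! j" unfolding W_def using that len' by (subst col_mat_of_cols) auto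
    then show ?thesis using that ws(3) by (simp add: ws'_def)
  qed
  have wsc: "ws ! j \<in> carrier_vec n" if "j < n" for j using ws that by auto
  have WW: "adj W * W = 1\<^sub>m n"
  proof (rule eq_matI)
    fix i j assume i: "i < dim_row (1\<^sub>m n)" and j: "j < dim_col (1\<^sub>m n)"
    hence i: "i < n" and j: "j < n" by auto
    have "(adj W * W) $$ (i,j) = col W j \<bullet>c col W i" using adj_mult_index[OF W i j] .
    also have "\<dots> = nf (ws ! j) * cnj (nf (ws ! i)) * (ws ! j \<bullet>c ws ! i)"
      unfolding colW[OF i] colW[OF j]
      using wsc[OF i] wsc[OF j]
      by (simp add: conjugate_smult_vec smult_scalar_prod_distrib scalar_prod_smult_distrib)
    also have "\<dots> = 1\<^sub>m n $$ (i,j)"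
    proof (cases "i = j")
      case True
      let ?s = "Re (ws ! i \<bullet>c ws ! i)"
      have ne: "ws ! i \<bullet>c ws ! i \<noteq> 0" using corthogonalD[OF ws(2), of i i] i ws(3) by auto
      have eq: "ws ! i \<bullet>c ws ! i = complex_of_real ?s" by (rule cscalar_self_real)
      have "?s \<noteq> 0"
      proof
        assume "?s = 0"
        then have "ws ! i \<bullet>c ws ! i = 0" using eq by simp
        with ne show False by simp
      qed
      then have pos: "?s > 0" using cscalar_self_real(2)[of "ws ! i"] by linarith
      obtain s where eq': "ws ! i \<bullet>c ws ! i = complex_of_real s" and spos: "s > 0"
        using eq pos by blast
      have nfv: "nf (ws ! i) = complex_of_real (1 / sqrt s)" unfolding nf_def eq' by simp
      have "nf (ws ! i) * cnj (nf (ws ! i)) * (ws ! i \<bullet>c ws ! i) = 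
         complex_of_real (1 / sqrt s * (1 / sqrt s) * s)"
        unfolding nfv eq' complex_cnj_complex_of_real of_real_mult ..
      also have "1 / sqrt s * (1 / sqrt s) * s = 1" using spos
        by (simp add: field_simps)
      finally show ?thesis using True i by simp
    next
      case False
      then show ?thesis using corthogonalD[OF ws(2), of j i] i j ws(3) by auto
    qed
    finally show "(adj W * W) $$ (i,j) = 1\<^sub>m n $$ (i,j)" .
  qed (use W in auto)
  have wsne: "ws \<noteq> []" using ws(3) n by auto
  have hd0: "ws ! 0 = v" using hd_conv_nth[OF wsne] hdws by simp
  have c0: "col W 0 = nf v \<cdot>\<^sub>v v" using colW[OF n] unfolding hd0 .
  show ?thesis
    by (rule exI[of _ W], rule exI[of _ "nf v"]) (intro conjI W WW c0)
qed

definition dmat :: "nat \<Rightarrow> (nat \<Rightarrow> complex) \<Rightarrow> complex mat" where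
  "dmat n d = mat n n (\<lambda>(i,j). if i = j then d i else 0)"

lemma dmat_carrier[simp]: "dmat n d \<in> carrier_mat n n" by (simp add: dmat_def)
lemma dmat_dims[simp]: "dim_row (dmat n d) = n" "dim_col (dmat n d) = n" by (simp_all add: dmat_def)

lemma adjmult_index: assumes "X \<in> carrier_mat nr nc" "Y \<in> carrier_mat nr nc'" "i < nc" "j < nc'"
  shows "(adj X * Y) $$ (i,j) = (\<Sum>k<nr. cnj (X $$ (k,i)) * Y $$ (k,j))"
  using assms by (auto simp: scalar_prod_def atLeast0LessThan intro!: sum.cong)

lemma triple_index: assumes V: "V \<in> carrier_mat n n" and i: "i < n" and j: "j < n"
  shows "(V * dmat n d * adj V) $$ (i,j) = (\<Sum>k<n. V $$ (i,k) * d k * cnj (V $$ (j,k)))"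
proof -
  have VD: "V * dmat n d \<in> carrier_mat n n" using V by simp
  have aV: "adj V \<in> carrier_mat n n" using V by simp
  have e1: "(V * dmat n d) $$ (i,l) = V $$ (i,l) * d l" if l: "l < n" for l
  proof -
    have "(V * dmat n d) $$ (i,l) = row V i \<bullet> col (dmat n d) l"
      by (rule index_mult_mat(1)) (use V i l in auto)
    also have "\<dots> = (\<Sum>k<n. V $$ (i,k) * (if k = l then d k else 0))"
      unfolding scalar_prod_def using V i l by (auto simp: dmat_def atLeast0LessThan intro!: sum.cong)
    also have "\<dots> = V $$ (i,l) * d l" using l
      by (simp add: if_distrib[of "\<lambda>x. _ * x"] sum.delta' cong: if_cong)
    finally show ?thesis .
  qed
  have "(V * dmat n d * adj V) $$ (i,j) = row (V * dmat n d) i \<bullet> col (adj V) j"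
    by (rule index_mult_mat(1)) (use VD aV i j in auto)
  also have "\<dots> = (\<Sum>l<n. row (V * dmat n d) i $ l * col (adj V) j $ l)"
    unfolding scalar_prod_def using aV V by (simp add: atLeast0LessThan)
  also have "\<dots> = (\<Sum>l<n. V $$ (i,l) * d l * cnj (V $$ (j,l)))"
  proof (rule sum.cong)
    fix l assume "l \<in> {..<n}"
    then have l: "l < n" by simp
    have "row (V * dmat n d) i $ l = (V * dmat n d) $$ (i,l)"
      by (rule index_row) (use VD i l in auto)
    moreover have "col (adj V) j $ l = adj V $$ (l,j)"
      by (rule index_col) (use aV j l in auto)
    ultimately show "row (V * dmat n d) i $ l * col (adj V) j $ l = V $$ (i,l) * d l * cnj (V $$ (j,l))"
      using e1[OF l] V j l by simp
  qed simp
  finally show ?thesis .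
qed

lemma sq_assoc: "A \<in> carrier_mat n n \<Longrightarrow> B \<in> carrier_mat n n \<Longrightarrow> C \<in> carrier_mat n n \<Longrightarrow>
  A * B * C = A * (B * C)" by (rule assoc_mult_mat)
lemma sq_mult_carrier: "A \<in> carrier_mat n n \<Longrightarrow> B \<in> carrier_mat n n \<Longrightarrow> A * B \<in> carrier_mat n n"
  by simp

lemma spectral:
  assumes "A \<in> carrier_mat n n" "adj A = A"
  shows "\<exists>U d. U \<in> carrier_mat n n \<and> adj U * U = 1\<^sub>m n \<and> A = U * dmat n d * adj U"
  using assms
proof (induction n arbitrary: A)
  case 0
  show ?case
    by (rule exI[of _ "1\<^sub>m 0"], rule exI[of _ "\<lambda>_. 0"]) (use 0 in \<open>auto intro!: eq_matI\<close>)
next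
  case (Suc m A)
  define n where "n = Suc m"
  have A: "A \<in> carrier_mat n n" and hA: "adj A = A" using Suc n_def by auto
  from spectrum_non_empty[OF A] obtain lam where "eigenvalue A lam"
    unfolding spectrum_def n_def by auto
  then obtain v where v: "v \<in> carrier_vec n" "v \<noteq> 0\<^sub>v n" "A *\<^sub>v v = lam \<cdot>\<^sub>v v"
    unfolding eigenvalue_def eigenvector_def using A by auto
  obtain W c where W: "W \<in> carrier_mat n n" and WW: "adj W * W = 1\<^sub>m n" and Wc: "col W 0 = c \<cdot>\<^sub>v v"
    using unitary_ext[OF v(1) v(2)] by blast
  have WW': "W * adj W = 1\<^sub>m n" using unitary_right[OF W WW] .
  have n0: "0 < n" unfolding n_def by simp
  have AW0: "A *\<^sub>v col W 0 = lam \<cdot>\<^sub>v col W 0"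
    unfolding Wc using A v by (simp add: mult_mat_vec smult_smult_assoc mult.commute)
  define A' where "A' = adj W * A * W"
  have A': "A' \<in> carrier_mat n n" unfolding A'_def using W A by auto
  have hA': "adj A' = A'"
  proof -
    have "adj A' = adj W * adj (adj W * A)" unfolding A'_def
      by (rule adj_mult[of _ n n _ n]) (use W A in auto)
    also have "adj (adj W * A) = adj A * W"
      using adj_mult[of "adj W" n n A n] W A by simp
    finally show ?thesis unfolding hA A'_def using W A
      by (simp add: assoc_mult_mat[of "adj W" n n A n W n])
  qed
  have col0: "col A' 0 = lam \<cdot>\<^sub>v unit_vec n 0"
  proof -
    have "col A' 0 = (adj W * A) *\<^sub>v col W 0" unfolding A'_def using W A n0 by auto
    also have "\<dots> = adj W *\<^sub>v (A *\<^sub>v col W 0)"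
      by (rule assoc_mult_mat_vec[of _ n n _ n]) (use W A adj_carrier[OF W] in auto)
    also have "\<dots> = lam \<cdot>\<^sub>v (adj W *\<^sub>v col W 0)" unfolding AW0
      by (rule mult_mat_vec[of _ n n]) (use W adj_carrier[OF W] in auto)
    also have "adj W *\<^sub>v col W 0 = col (adj W * W) 0"
      by (rule col_mult2[symmetric, of _ n n _ n]) (use W adj_carrier[OF W] n0 in auto)
    also have "\<dots> = unit_vec n 0" unfolding WW using n0 by simp
    finally show ?thesis .
  qed
  have A'0: "A' $$ (i,0) = (if i = 0 then lam else 0)" if "i < n" for i
  proof -
    have "A' $$ (i,0) = col A' 0 $ i" using that A' n0 by auto
    then show ?thesis unfolding col0 using that by (auto simp: unit_vec_def)
  qed
  have A'h: "A' $$ (i,j) = cnj (A' $$ (j,i))" if "i < n" "j < n" for i j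
    using arg_cong[OF hA', of "\<lambda>X. X $$ (i,j)"] that A' by auto
  define A3 where "A3 = mat m m (\<lambda>(i,j). A' $$ (Suc i, Suc j))"
  have A3: "A3 \<in> carrier_mat m m" unfolding A3_def by auto
  have hA3: "adj A3 = A3"
  proof (rule eq_matI)
    fix i j assume "i < dim_row A3" "j < dim_col A3"
    then have i: "i < m" and j: "j < m" using A3 by auto
    have "A' $$ (Suc i, Suc j) = cnj (A' $$ (Suc j, Suc i))"
      using A'h[of "Suc i" "Suc j"] i j by (simp add: n_def)
    then show "adj A3 $$ (i,j) = A3 $$ (i,j)" using i j A3 by (simp add: A3_def)
  qed (use A3 in auto)
  from Suc.IH[OF A3 hA3] obtain U3 d3 where U3: "U3 \<in> carrier_mat m m" and UU3: "adj U3 * U3 = 1\<^sub>m m"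
    and A3d: "A3 = U3 * dmat m d3 * adj U3" by blast
  define V where "V = mat n n (\<lambda>(i,j). if i = 0 \<and> j = 0 then 1 else if i = 0 \<or> j = 0 then 0 else U3 $$ (i - 1, j - 1))"
  define d where "d = (\<lambda>k. if k = 0 then lam else d3 (k - 1))"
  have V: "V \<in> carrier_mat n n" unfolding V_def by auto
  have VV: "adj V * V = 1\<^sub>m n"
  proof (rule eq_matI)
    fix i j assume "i < dim_row (1\<^sub>m n)" "j < dim_col (1\<^sub>m n)"
    then have i: "i < n" and j: "j < n" by auto
    have e: "(adj V * V) $$ (i,j) = (\<Sum>k<n. cnj (V $$ (k,i)) * V $$ (k,j))"
      using adjmult_index[OF V V i j] .
    also have "\<dots> = cnj (V $$ (0,i)) * V $$ (0,j) + (\<Sum>k<m. cnj (V $$ (Suc k,i)) * V $$ (Suc k,j))"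
      unfolding n_def by (subst sum.lessThan_Suc_shift) simp
    also have "\<dots> = 1\<^sub>m n $$ (i,j)"
    proof (cases i)
      case 0
      then show ?thesis using i j by (cases j) (auto simp: V_def n_def)
    next
      case (Suc i')
      show ?thesis
      proof (cases j)
        case 0
        then show ?thesis using i j Suc by (auto simp: V_def n_def)
      next
        case (Suc j')
        have "(\<Sum>k<m. cnj (V $$ (Suc k,i)) * V $$ (Suc k,j)) = (\<Sum>k<m. cnj (U3 $$ (k,i')) * U3 $$ (k,j'))"
          using i j \<open>i = Suc i'\<close> Suc by (auto simp: V_def n_def intro!: sum.cong)
        also have "\<dots> = (adj U3 * U3) $$ (i',j')"
          using adjmult_index[OF U3 U3, of i' j'] i j \<open>i = Suc i'\<close> Suc by (simp add: n_def)
        finally show ?thesis unfolding UU3 using i j \<open>i = Suc i'\<close> Suc by (auto simp: V_def n_def)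
      qed
    qed
    finally show "(adj V * V) $$ (i,j) = 1\<^sub>m n $$ (i,j)" .
  qed (use V in auto)
  have A'd: "A' = V * dmat n d * adj V"
  proof (rule eq_matI)
    fix i j assume "i < dim_row (V * dmat n d * adj V)" "j < dim_col (V * dmat n d * adj V)"
    then have i: "i < n" and j: "j < n" using V by auto
    have "(V * dmat n d * adj V) $$ (i,j) = (\<Sum>k<n. V $$ (i,k) * d k * cnj (V $$ (j,k)))"
      using triple_index[OF V i j] .
    also have "\<dots> = V $$ (i,0) * d 0 * cnj (V $$ (j,0)) + (\<Sum>k<m. V $$ (i,Suc k) * d (Suc k) * cnj (V $$ (j,Suc k)))"
      unfolding n_def by (subst sum.lessThan_Suc_shift) simp
    also have "\<dots> = A' $$ (i,j)"
    proof (cases i)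
      case 0
      show ?thesis
      proof (cases j)
        case 0
        then show ?thesis using \<open>i = 0\<close> A'0[of 0] n0 by (auto simp: V_def n_def d_def)
      next
        case (Suc j')
        have "A' $$ (i,j) = 0" using A'h[OF i j] A'0[OF j] Suc \<open>i = 0\<close> by simp
        then show ?thesis using \<open>i = 0\<close> i j Suc by (auto simp: V_def n_def d_def)
      qed
    next
      case (Suc i')
      show ?thesis
      proof (cases j)
        case 0
        then show ?thesis using A'0[OF i] i j Suc by (auto simp: V_def n_def)
      next
        case (Suc j')
        have "(\<Sum>k<m. V $$ (i,Suc k) * d (Suc k) * cnj (V $$ (j,Suc k))) = (\<Sum>k<m. U3 $$ (i',k) * d3 k * cnj (U3 $$ (j',k)))"
          using i j \<open>i = Suc i'\<close> Suc by (auto simp: V_def n_def d_def intro!: sum.cong)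
        also have "\<dots> = A3 $$ (i',j')"
          unfolding A3d using triple_index[OF U3, of i' j' d3] i j \<open>i = Suc i'\<close> Suc by (simp add: n_def)
        finally show ?thesis using i j \<open>i = Suc i'\<close> Suc by (auto simp: V_def n_def A3_def)
      qed
    qed
    finally show "A' $$ (i,j) = (V * dmat n d * adj V) $$ (i,j)" by simp
  qed (use V A' in auto)
  define U where "U = W * V"
  have U: "U \<in> carrier_mat n n" unfolding U_def using W V by auto
  have adjU: "adj U = adj V * adj W" unfolding U_def using adj_mult[OF W V] .
  have aW: "adj W \<in> carrier_mat n n" and aV: "adj V \<in> carrier_mat n n" using W V by auto
  have c1: "adj W * (W * X) = X" if "X \<in> carrier_mat n n" for X
    using that W aW WW by (simp add: assoc_mult_mat[symmetric, of _ n n _ n _ n])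
  have c2: "W * (adj W * X) = X" if "X \<in> carrier_mat n n" for X
    using that W aW WW' by (simp add: assoc_mult_mat[symmetric, of _ n n _ n _ n])
  have "adj U * U = adj V * adj W * (W * V)" using adjU by (simp add: U_def)
  also have "\<dots> = adj V * (adj W * (W * V))"
    using W V aW aV by (simp add: assoc_mult_mat[of _ n n _ n _ n])
  also have "\<dots> = 1\<^sub>m n" unfolding c1[OF V] using VV .
  finally have UU: "adj U * U = 1\<^sub>m n" .
  have "W * A' * adj W = W * (adj W * (A * (W * adj W)))" unfolding A'_def
    using W A aW by (simp add: sq_assoc[of _ n] sq_mult_carrier[of _ n])
  also have "\<dots> = A" using A W aW unfolding WW' by (subst c2) auto
  finally have "A = W * A' * adj W" by simp
  also have "\<dots> = W * V * dmat n d * (adj V * adj W)" unfolding A'd using W V aW aV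
    by (simp add: sq_assoc[of _ n] sq_mult_carrier[of _ n])
  also have "\<dots> = U * dmat n d * adj U" using adjU by (simp add: U_def)
  finally show ?case using U UU unfolding n_def by blast
qed



definition qf :: "complex mat \<Rightarrow> complex vec \<Rightarrow> complex" where
  "qf A v = (A *\<^sub>v v) \<bullet>c v"

lemma mult_unit_vec: assumes "(M :: complex mat) \<in> carrier_mat nr n" "k < n"
  shows "M *\<^sub>v unit_vec n k = col M k"
  using assms by (intro eq_vecI) (auto simp: scalar_prod_def unit_vec_def
      if_distrib[of "\<lambda>x. _ * x"] sum.delta cong: if_cong)

lemma qf_sum: assumes A: "A \<in> carrier_mat n n" and v: "v \<in> carrier_vec n"
  shows "qf A v = (\<Sum>l<n. (\<Sum>i<n. A $$ (l,i) * v $ i) * cnj (v $ l))"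
  using A v by (auto simp: qf_def scalar_prod_def atLeast0LessThan intro!: sum.cong)

lemma qf_minus: assumes "A \<in> carrier_mat n n" "B \<in> carrier_mat n n" "v \<in> carrier_vec n"
  shows "qf (A - B) v = qf A v - qf B v"
  unfolding qf_def using assms
  by (simp add: minus_mult_distrib_mat_vec minus_scalar_prod_distrib[of _ n])

lemma smult_mat_vec: assumes "(A :: complex mat) \<in> carrier_mat nr nc" "v \<in> carrier_vec nc"
  shows "(a \<cdot>\<^sub>m A) *\<^sub>v v = a \<cdot>\<^sub>v (A *\<^sub>v v)"
  using assms by (intro eq_vecI) (auto simp: scalar_prod_def sum_distrib_left mult_ac)

lemma qf_smult: assumes "A \<in> carrier_mat n n" "v \<in> carrier_vec n"
  shows "qf (a \<cdot>\<^sub>m A) v = a * qf A v"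
  unfolding qf_def using assms by (simp add: smult_mat_vec)

lemma qf_one: assumes "v \<in> carrier_vec n" shows "qf (1\<^sub>m n) v = v \<bullet>c v"
  unfolding qf_def using assms by simp

lemma adj_cscalar: assumes A: "A \<in> carrier_mat nr nc" and x: "x \<in> carrier_vec nc" and y: "y \<in> carrier_vec nr"
  shows "(A *\<^sub>v x) \<bullet>c y = x \<bullet>c (adj A *\<^sub>v y)"
proof -
  have "(A *\<^sub>v x) \<bullet>c y = (\<Sum>p<nr. (\<Sum>k<nc. A $$ (p,k) * x $ k) * cnj (y $ p))"
    using A x y by (auto simp: scalar_prod_def atLeast0LessThan intro!: sum.cong)
  also have "\<dots> = (\<Sum>p<nr. \<Sum>k<nc. A $$ (p,k) * x $ k * cnj (y $ p))"
    by (simp add: sum_distrib_right)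
  also have "\<dots> = (\<Sum>k<nc. \<Sum>p<nr. A $$ (p,k) * x $ k * cnj (y $ p))"
    by (rule sum.swap)
  also have "\<dots> = (\<Sum>k<nc. x $ k * cnj (\<Sum>p<nr. cnj (A $$ (p,k)) * y $ p))"
    by (simp add: sum_distrib_left mult_ac)
  also have "\<dots> = x \<bullet>c (adj A *\<^sub>v y)"
    using A x y by (auto simp: scalar_prod_def atLeast0LessThan intro!: sum.cong)
  finally show ?thesis .
qed

lemma psd_carrier: "psd n A \<Longrightarrow> A \<in> carrier_mat n n" by (simp add: psd_def)

lemma psd_qf: assumes "psd n A" "v \<in> carrier_vec n"
  shows "qf A v = complex_of_real (Re (qf A v))" "Re (qf A v) \<ge> 0"
  using assms unfolding psd_def qf_def
  by (auto simp: less_eq_complex_def complex_eq_iff)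

lemma psdI: assumes "A \<in> carrier_mat n n" "\<And>v. v \<in> carrier_vec n \<Longrightarrow> Im (qf A v) = 0 \<and> Re (qf A v) \<ge> 0"
  shows "psd n A"
  using assms unfolding psd_def qf_def by (auto simp: less_eq_complex_def)

lemma dmat_mult_vec: assumes "y \<in> carrier_vec n"
  shows "dmat n d *\<^sub>v y = vec n (\<lambda>k. d k * y $ k)"
  using assms by (intro eq_vecI) (auto simp: dmat_def scalar_prod_def
      if_distrib[of "\<lambda>x. x * _"] sum.delta cong: if_cong)

lemma qf_coords: assumes U: "U \<in> carrier_mat n n" and v: "v \<in> carrier_vec n"
  shows "qf (U * dmat n d * adj U) v = (\<Sum>k<n. d k * ((adj U *\<^sub>v v) $ k * cnj ((adj U *\<^sub>v v) $ k)))"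
proof -
  define y where "y = adj U *\<^sub>v v"
  have y: "y \<in> carrier_vec n" unfolding y_def using adj_carrier[OF U] v by auto
  have "(U * dmat n d * adj U) *\<^sub>v v = (U * dmat n d) *\<^sub>v y"
    unfolding y_def by (rule assoc_mult_mat_vec[of _ n n _ n]) (use U v adj_carrier[OF U] in auto)
  also have "\<dots> = U *\<^sub>v (dmat n d *\<^sub>v y)"
    by (rule assoc_mult_mat_vec[of _ n n _ n]) (use U y in auto)
  finally have "(U * dmat n d * adj U) *\<^sub>v v = U *\<^sub>v (dmat n d *\<^sub>v y)" .
  moreover have Dy: "dmat n d *\<^sub>v y \<in> carrier_vec n" by (rule mult_mat_vec_carrier[OF dmat_carrier y])
  ultimately have "qf (U * dmat n d * adj U) v = (dmat n d *\<^sub>v y) \<bullet>c y"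
    unfolding qf_def using adj_cscalar[OF U Dy v] unfolding y_def by simp
  also have "\<dots> = (\<Sum>k<n. d k * (y $ k * cnj (y $ k)))"
    unfolding dmat_mult_vec[OF y] using y
    by (auto simp: scalar_prod_def atLeast0LessThan mult_ac intro!: sum.cong)
  finally show ?thesis unfolding y_def .
qed

lemma qf_coords_real: assumes U: "U \<in> carrier_mat n n" and v: "v \<in> carrier_vec n"
  shows "qf (U * dmat n (\<lambda>k. complex_of_real (r k)) * adj U) v =
     complex_of_real (\<Sum>k<n. r k * (cmod ((adj U *\<^sub>v v) $ k))^2)"
  unfolding qf_coords[OF U v] of_real_sum of_real_mult complex_norm_square ..



lemma sum_two_delta: fixes f :: "nat \<Rightarrow> complex" assumes "i < n" "j < n" "i \<noteq> j"
  shows "(\<Sum>k<n. f k * ((if k = i then 1 else 0) + (if k = j then c else 0))) = f i + c * f j"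
proof -
  have "(\<Sum>k<n. f k * ((if k = i then 1 else 0) + (if k = j then c else 0)))
      = (\<Sum>k<n. (if k = i then f k else 0) + (if k = j then c * f k else 0))"
    by (rule sum.cong) (use assms in \<open>auto simp: mult.commute\<close>)
  also have "\<dots> = f i + c * f j" using assms by (simp add: sum.distrib)
  finally show ?thesis .
qed

lemma sum_two_delta': fixes f :: "nat \<Rightarrow> complex" assumes "i < n" "j < n" "i \<noteq> j"
  shows "(\<Sum>k<n. f k * cnj ((if k = i then 1 else 0) + (if k = j then c else 0))) = f i + cnj c * f j"
proof -
  have "(\<Sum>k<n. f k * cnj ((if k = i then 1 else 0) + (if k = j then c else 0)))
      = (\<Sum>k<n. (if k = i then f k else 0) + (if k = j then cnj c * f k else 0))"
    by (rule sum.cong) (use assms in \<open>auto simp: mult.commute\<close>)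
  also have "\<dots> = f i + cnj c * f j" using assms by (simp add: sum.distrib)
  finally show ?thesis .
qed

lemma qf_two: assumes A: "A \<in> carrier_mat n n" and ij: "i < n" "j < n" "i \<noteq> j"
  shows "qf A (vec n (\<lambda>t. (if t = i then 1 else 0) + (if t = j then c else 0))) =
     A $$ (i,i) + c * A $$ (i,j) + cnj c * (A $$ (j,i) + c * A $$ (j,j))"
proof -
  let ?v = "vec n (\<lambda>t. (if t = i then 1 else 0) + (if t = j then c else 0))"
  have "qf A ?v = (\<Sum>l<n. (\<Sum>k<n. A $$ (l,k) * ?v $ k) * cnj (?v $ l))"
    by (rule qf_sum[OF A]) simp
  also have "\<dots> = (\<Sum>l<n. (A $$ (l,i) + c * A $$ (l,j)) * cnj ((if l = i then 1 else 0) + (if l = j then c else 0)))"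
  proof (rule sum.cong)
    fix l assume "l \<in> {..<n}"
    have "(\<Sum>k<n. A $$ (l,k) * ?v $ k) = (\<Sum>k<n. A $$ (l,k) * ((if k = i then 1 else 0) + (if k = j then c else 0)))"
      by (rule sum.cong) auto
    also have "\<dots> = A $$ (l,i) + c * A $$ (l,j)" by (rule sum_two_delta[OF ij])
    finally show "(\<Sum>k<n. A $$ (l,k) * ?v $ k) * cnj (?v $ l) = 
       (A $$ (l,i) + c * A $$ (l,j)) * cnj ((if l = i then 1 else 0) + (if l = j then c else 0))"
      using \<open>l \<in> {..<n}\<close> by simp
  qed simp
  also have "\<dots> = A $$ (i,i) + c * A $$ (i,j) + cnj c * (A $$ (j,i) + c * A $$ (j,j))"
    by (rule sum_two_delta'[OF ij])
  finally show ?thesis .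
qed

lemma qf_one_pt: assumes A: "A \<in> carrier_mat n n" and i: "i < n"
  shows "qf A (unit_vec n i) = A $$ (i,i)"
proof -
  have "qf A (unit_vec n i) = col A i \<bullet>c unit_vec n i"
    unfolding qf_def using mult_unit_vec[OF A i] by simp
  also have "\<dots> = (\<Sum>k<n. col A i $ k * (if k = i then 1 else 0))"
    using A i by (auto simp: scalar_prod_def atLeast0LessThan unit_vec_def intro!: sum.cong)
  also have "\<dots> = A $$ (i,i)" using A i
    by (simp add: if_distrib[of "\<lambda>x. _ * x"] sum.delta' cong: if_cong)
  finally show ?thesis .
qed

lemma psd_herm: assumes P: "psd n A" shows "adj A = A"
proof -
  have A: "A \<in> carrier_mat n n" using P by (simp add: psd_def)
  have real: "Im (qf A v) = 0" if "v \<in> carrier_vec n" for v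
    using psd_qf(1)[OF P that] by (metis Im_complex_of_real)
  have d: "Im (A $$ (i,i)) = 0" if "i < n" for i
    using real[of "unit_vec n i"] qf_one_pt[OF A that] by simp
  have h: "A $$ (j,i) = cnj (A $$ (i,j))" if ij: "i < n" "j < n" for i j
  proof (cases "i = j")
    case True
    then show ?thesis using d[OF ij(1)] by (simp add: complex_eq_iff)
  next
    case False
    have q1: "Im (qf A (vec n (\<lambda>t. (if t = i then 1 else 0) + (if t = j then 1 else 0)))) = 0"
      by (rule real) simp
    then have e1: "Im (A $$ (i,j)) + Im (A $$ (j,i)) = 0"
      unfolding qf_two[OF A ij False] using d[OF ij(1)] d[OF ij(2)] by simp
    have q2: "Im (qf A (vec n (\<lambda>t. (if t = i then 1 else 0) + (if t = j then \<i> else 0)))) = 0"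
      by (rule real) simp
    then have e2: "Re (A $$ (i,j)) - Re (A $$ (j,i)) = 0"
      unfolding qf_two[OF A ij False] using d[OF ij(1)] d[OF ij(2)] by simp
    show ?thesis using e1 e2 by (simp add: complex_eq_iff)
  qed
  show ?thesis
  proof (rule eq_matI)
    fix i j assume "i < dim_row A" "j < dim_col A"
    then have i: "i < n" and j: "j < n" using A by auto
    have "A $$ (i,j) = cnj (A $$ (j,i))" using h[OF j i] .
    then show "adj A $$ (i,j) = A $$ (i,j)" using A i j by simp
  qed (use A in auto)
qed

lemma psd_spectral: assumes P: "psd n A"
  shows "\<exists>U r. U \<in> carrier_mat n n \<and> adj U * U = 1\<^sub>m n \<and>
     A = U * dmat n (\<lambda>k. complex_of_real (r k)) * adj U \<and> (\<forall>k<n. r k \<ge> 0)"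
proof -
  have A: "A \<in> carrier_mat n n" using P by (simp add: psd_def)
  obtain U d where U: "U \<in> carrier_mat n n" and UU: "adj U * U = 1\<^sub>m n" and Ad: "A = U * dmat n d * adj U"
    using spectral[OF A psd_herm[OF P]] by blast
  have aU: "adj U \<in> carrier_mat n n" using U by simp
  have dk: "d k = qf A (col U k)" if k: "k < n" for k
  proof -
    have y: "adj U *\<^sub>v col U k = unit_vec n k"
      using col_mult2[OF aU U k] UU k by simp
    have "qf A (col U k) = (\<Sum>j<n. d j * ((unit_vec n k) $ j * cnj ((unit_vec n k) $ j)))"
      unfolding Ad using qf_coords[OF U, of "col U k" d] U k y by simp
    also have "\<dots> = (\<Sum>j<n. if j = k then d j else 0)"
      by (rule sum.cong) (auto simp: unit_vec_def)
    also have "\<dots> = d k" using k by simp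
    finally show ?thesis by simp
  qed
  define r where "r k = Re (d k)" for k
  have dr: "d k = complex_of_real (r k)" and rpos: "r k \<ge> 0" if k: "k < n" for k
    using psd_qf[OF P, of "col U k"] dk[OF k] U k unfolding r_def by auto
  have "dmat n d = dmat n (\<lambda>k. complex_of_real (r k))"
    by (rule eq_matI) (auto simp: dmat_def dr)
  then show ?thesis using U UU Ad rpos by metis
qed

lemma psd_qf0: assumes P: "psd n B" and v: "v \<in> carrier_vec n" and q: "qf B v = 0"
  shows "B *\<^sub>v v = 0\<^sub>v n"
proof -
  obtain U r where U: "U \<in> carrier_mat n n" and UU: "adj U * U = 1\<^sub>m n"
    and Bd: "B = U * dmat n (\<lambda>k. complex_of_real (r k)) * adj U" and rpos: "\<forall>k<n. r k \<ge> 0"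
    using psd_spectral[OF P] by blast
  define y where "y = adj U *\<^sub>v v"
  have aU: "adj U \<in> carrier_mat n n" using U by simp
  have y: "y \<in> carrier_vec n" unfolding y_def using aU v by simp
  have "complex_of_real (\<Sum>k<n. r k * (cmod (y $ k))^2) = 0"
    using q qf_coords_real[OF U v, of r] unfolding Bd y_def by simp
  then have "(\<Sum>k<n. r k * (cmod (y $ k))^2) = 0" by (rule of_real_eq_0_iff[THEN iffD1])
  moreover have "\<forall>k\<in>{..<n}. 0 \<le> r k * (cmod (y $ k))^2" using rpos by simp
  ultimately have z: "r k * (cmod (y $ k))^2 = 0" if "k < n" for k
    using sum_nonneg_eq_0_iff[of "{..<n}" "\<lambda>k. r k * (cmod (y $ k))^2"] that by simp
  have Dy: "dmat n (\<lambda>k. complex_of_real (r k)) *\<^sub>v y = 0\<^sub>v n"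
    unfolding dmat_mult_vec[OF y] using z by (intro eq_vecI) auto
  have "B *\<^sub>v v = (U * dmat n (\<lambda>k. complex_of_real (r k))) *\<^sub>v y"
    unfolding Bd y_def by (rule assoc_mult_mat_vec[of _ n n _ n]) (use U v aU in auto)
  also have "\<dots> = U *\<^sub>v (dmat n (\<lambda>k. complex_of_real (r k)) *\<^sub>v y)"
    by (rule assoc_mult_mat_vec[of _ n n _ n]) (use U y in auto)
  also have "\<dots> = 0\<^sub>v n" unfolding Dy using U by (intro eq_vecI) (auto simp: scalar_prod_def)
  finally show ?thesis .
qed

lemma trace_spec: assumes U: "U \<in> carrier_mat n n" and X: "X \<in> carrier_mat n n"
  shows "mtrace (U * dmat n d * adj U * X) = (\<Sum>k<n. d k * qf X (col U k))"
proof -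
  let ?S = "U * dmat n d * adj U"
  have S: "?S \<in> carrier_mat n n" using mult_carrier_mat[OF mult_carrier_mat[OF U dmat_carrier] adj_carrier[OF U]] .
  have "mtrace (?S * X) = (\<Sum>i<n. \<Sum>l<n. ?S $$ (i,l) * X $$ (l,i))"
    unfolding mtrace_def using S X by (auto simp: scalar_prod_def atLeast0LessThan intro!: sum.cong)
  also have "\<dots> = (\<Sum>i<n. \<Sum>l<n. \<Sum>k<n. U $$ (i,k) * d k * cnj (U $$ (l,k)) * X $$ (l,i))"
    using triple_index[OF U] by (simp add: sum_distrib_right)
  also have "\<dots> = (\<Sum>i<n. \<Sum>k<n. \<Sum>l<n. U $$ (i,k) * d k * cnj (U $$ (l,k)) * X $$ (l,i))"
    by (rule sum.cong[OF refl], rule sum.swap)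
  also have "\<dots> = (\<Sum>k<n. \<Sum>i<n. \<Sum>l<n. U $$ (i,k) * d k * cnj (U $$ (l,k)) * X $$ (l,i))"
    by (rule sum.swap)
  also have "\<dots> = (\<Sum>k<n. \<Sum>l<n. \<Sum>i<n. U $$ (i,k) * d k * cnj (U $$ (l,k)) * X $$ (l,i))"
    by (rule sum.cong[OF refl], rule sum.swap)
  also have "\<dots> = (\<Sum>k<n. d k * (\<Sum>l<n. (\<Sum>i<n. X $$ (l,i) * col U k $ i) * cnj (col U k $ l)))"
    using U by (auto simp: sum_distrib_left sum_distrib_right mult_ac intro!: sum.cong)
  also have "\<dots> = (\<Sum>k<n. d k * qf X (col U k))"
    using qf_sum[OF X] U by (auto intro!: sum.cong)
  finally show ?thesis .
qed



lemma kron_dims[simp]: "dim_row (kron A B) = dim_row A * dim_row B" "dim_col (kron A B) = dim_col A * dim_col B"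
  by (simp_all add: kron_def)

lemma tensor_carrier:
  "length Ms = length ds \<Longrightarrow> (\<forall>k<length ds. Ms ! k \<in> carrier_mat (ds ! k) (ds ! k)) \<Longrightarrow>
   tensor_list Ms \<in> carrier_mat (prod_list ds) (prod_list ds)"
proof (induction ds arbitrary: Ms)
  case Nil then show ?case by simp
next
  case (Cons d ds Ms)
  from Cons.prems(1) obtain M Ms' where Ms: "Ms = M # Ms'" by (cases Ms) auto
  have M: "M \<in> carrier_mat d d" using Cons.prems(2)[rule_format, of 0] Ms by simp
  have l: "length Ms' = length ds" using Cons.prems(1) Ms by simp
  have c: "\<forall>k<length ds. Ms' ! k \<in> carrier_mat (ds ! k) (ds ! k)"
  proof (intro allI impI)
    fix k assume "k < length ds"
    then show "Ms' ! k \<in> carrier_mat (ds ! k) (ds ! k)" using Cons.prems(2)[rule_format, of "Suc k"] Ms by simp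
  qed
  have T: "tensor_list Ms' \<in> carrier_mat (prod_list ds) (prod_list ds)" by (rule Cons.IH[OF l c])
  have d1: "dim_row M = d" "dim_col M = d" using M by auto
  have d2: "dim_row (tensor_list Ms') = prod_list ds" "dim_col (tensor_list Ms') = prod_list ds" using T by auto
  show ?case unfolding Ms by (rule carrier_matI) (simp_all only: tensor_list.simps kron_dims d1 d2 prod_list.Cons)
qed

lemma kron_one: "kron (1\<^sub>m a) (1\<^sub>m b) = 1\<^sub>m (a * b)"
proof (rule eq_matI)
  fix i j assume "i < dim_row (1\<^sub>m (a * b))" "j < dim_col (1\<^sub>m (a * b))"
  then have i: "i < a * b" and j: "j < a * b" by auto
  then have b: "b > 0" by (cases b) auto
  have ia: "i div b < a" "j div b < a" using i j b by (simp_all add: less_mult_imp_div_less mult.commute)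
  have ib: "i mod b < b" "j mod b < b" using b by auto
  have "(i div b = j div b \<and> i mod b = j mod b) = (i = j)"
    by (metis div_mult_mod_eq)
  then show "kron (1\<^sub>m a) (1\<^sub>m b) $$ (i, j) = 1\<^sub>m (a * b) $$ (i, j)"
    using i j ia ib by (auto simp: kron_def)
qed auto

lemma tensor_ones:
  "length Ms = length ds \<Longrightarrow> (\<forall>k<length ds. Ms ! k = 1\<^sub>m (ds ! k)) \<Longrightarrow>
   tensor_list Ms = 1\<^sub>m (prod_list ds)"
proof (induction ds arbitrary: Ms)
  case Nil then show ?case by simp
next
  case (Cons d ds Ms)
  from Cons.prems(1) obtain M Ms' where Ms: "Ms = M # Ms'" by (cases Ms) auto
  have M: "M = 1\<^sub>m d" using Cons.prems(2)[rule_format, of 0] Ms by simp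
  have "tensor_list Ms' = 1\<^sub>m (prod_list ds)"
    using Cons.IH[of Ms'] Cons.prems Ms by force
  then show ?case using M Ms by (simp add: kron_one)
qed

lemma mat_sum_props: "(\<forall>j<N. f j \<in> carrier_mat n n) \<Longrightarrow>
  mat_sum n N f \<in> carrier_mat n n \<and> a \<cdot>\<^sub>m mat_sum n N f = mat_sum n N (\<lambda>j. a \<cdot>\<^sub>m f j)"
proof (induction N)
  case 0 then show ?case by simp
next
  case (Suc N)
  then have IH: "mat_sum n N f \<in> carrier_mat n n" "a \<cdot>\<^sub>m mat_sum n N f = mat_sum n N (\<lambda>j. a \<cdot>\<^sub>m f j)"
    by auto
  have fN: "f N \<in> carrier_mat n n" using Suc.prems by auto
  show ?case using IH fN by (simp add: add_smult_distrib_left_mat)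
qed

lemma psd_one: "psd n (1\<^sub>m n)"
  unfolding psd_def by auto

lemma sep_scale: assumes S: "separable ds A" and r: "r \<ge> 0"
  shows "separable ds (complex_of_real r \<cdot>\<^sub>m A)"
proof -
  obtain N c P where cP: "\<forall>j<N. c j \<ge> 0 \<and> (\<forall>k<length ds. psd (ds ! k) (P j k))"
    and A: "A = mat_sum (total_dim ds) N (\<lambda>j. complex_of_real (c j) \<cdot>\<^sub>m tensor_list (map (P j) [0..<length ds]))"
    using S unfolding separable_def by blast
  let ?T = "\<lambda>j. tensor_list (map (P j) [0..<length ds])"
  have T: "?T j \<in> carrier_mat (total_dim ds) (total_dim ds)" if "j < N" for j
    unfolding total_dim_def
    by (rule tensor_carrier) (use cP that in \<open>auto simp: psd_def\<close>)
  have "complex_of_real r \<cdot>\<^sub>m A = mat_sum (total_dim ds) N (\<lambda>j. complex_of_real r \<cdot>\<^sub>m (complex_of_real (c j) \<cdot>\<^sub>m ?T j))"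
    unfolding A by (rule conjunct2[OF mat_sum_props]) (use T in auto)
  also have "\<dots> = mat_sum (total_dim ds) N (\<lambda>j. complex_of_real (r * c j) \<cdot>\<^sub>m ?T j)"
    by (rule arg_cong[where f = "mat_sum _ _"]) (auto intro!: eq_matI)
  finally show ?thesis unfolding separable_def using cP r
    by (intro exI[of _ N] exI[of _ "\<lambda>j. r * c j"] exI[of _ P]) auto
qed

lemma sep_one: "separable ds (1\<^sub>m (total_dim ds))"
proof -
  let ?P = "\<lambda>(j::nat) k. 1\<^sub>m (ds ! k)"
  have T: "tensor_list (map (?P 0) [0..<length ds]) = 1\<^sub>m (total_dim ds)"
    unfolding total_dim_def by (rule tensor_ones) auto
  have "mat_sum (total_dim ds) 1 (\<lambda>j. complex_of_real 1 \<cdot>\<^sub>m tensor_list (map (?P j) [0..<length ds]))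
      = 1\<^sub>m (total_dim ds)"
    unfolding T by (auto intro!: eq_matI)
  then show ?thesis unfolding separable_def
    by (intro exI[of _ "1::nat"] exI[of _ "\<lambda>_. 1::real"] exI[of _ ?P]) (auto simp: psd_one)
qed

lemma mtrace_sum: assumes "A \<in> carrier_mat n n" shows "mtrace A = (\<Sum>i<n. A $$ (i,i))"
  using assms by (simp add: mtrace_def)

lemma mtrace_minus: "A \<in> carrier_mat n n \<Longrightarrow> B \<in> carrier_mat n n \<Longrightarrow> mtrace (A - B) = mtrace A - mtrace B"
  by (simp add: mtrace_def sum_subtractf)

lemma mtrace_add: "A \<in> carrier_mat n n \<Longrightarrow> B \<in> carrier_mat n n \<Longrightarrow> mtrace (A + B) = mtrace A + mtrace B"
  by (simp add: mtrace_def sum.distrib)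

lemma mtrace_smult: "A \<in> carrier_mat n n \<Longrightarrow> mtrace (a \<cdot>\<^sub>m A) = a * mtrace A"
  by (simp add: mtrace_def sum_distrib_left)

lemma mtrace_qf: assumes A: "A \<in> carrier_mat n n" shows "mtrace A = (\<Sum>i<n. qf A (unit_vec n i))"
  unfolding mtrace_sum[OF A] using qf_one_pt[OF A] by simp

lemma psd_trace: assumes P: "psd n M"
  shows "mtrace M = complex_of_real (Re (mtrace M))" "Re (mtrace M) \<ge> 0"
proof -
  have M: "M \<in> carrier_mat n n" using P by (simp add: psd_def)
  have e: "mtrace M = complex_of_real (\<Sum>i<n. Re (qf M (unit_vec n i)))"
    unfolding mtrace_qf[OF M] of_real_sum using psd_qf(1)[OF P] by (auto intro!: sum.cong)
  show "mtrace M = complex_of_real (Re (mtrace M))" using e by simp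
  show "Re (mtrace M) \<ge> 0" unfolding e using psd_qf(2)[OF P] by (simp add: sum_nonneg)
qed

lemma psd_trace0: assumes P: "psd n M" and t: "mtrace M = 0" shows "M = 0\<^sub>m n n"
proof -
  have M: "M \<in> carrier_mat n n" using P by (simp add: psd_def)
  have e: "(\<Sum>i<n. Re (qf M (unit_vec n i))) = 0"
    using t unfolding mtrace_qf[OF M] by (metis Re_sum zero_complex.sel(1))
  have z: "Re (qf M (unit_vec n i)) = 0" if "i < n" for i
    using sum_nonneg_eq_0_iff[of "{..<n}" "\<lambda>i. Re (qf M (unit_vec n i))"] e psd_qf(2)[OF P] that by simp
  have col0: "col M i = 0\<^sub>v n" if i: "i < n" for i
  proof -
    have "qf M (unit_vec n i) = 0" using psd_qf(1)[OF P, of "unit_vec n i"] z[OF i] by simp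
    then have "M *\<^sub>v unit_vec n i = 0\<^sub>v n" by (rule psd_qf0[OF P unit_vec_carrier])
    then show ?thesis using mult_unit_vec[OF M i] by simp
  qed
  show ?thesis
  proof (rule eq_matI)
    fix i j assume "i < dim_row (0\<^sub>m n n)" "j < dim_col (0\<^sub>m n n)"
    then have i: "i < n" and j: "j < n" by auto
    have "M $$ (i,j) = col M j $ i" using M i j by simp
    then show "M $$ (i,j) = 0\<^sub>m n n $$ (i,j)" using col0[OF j] i j by simp
  qed (use M in auto)
qed

lemma psd_smult: assumes P: "psd n A" and r: "r \<ge> 0" shows "psd n (complex_of_real r \<cdot>\<^sub>m A)"
proof (rule psdI)
  have A: "A \<in> carrier_mat n n" using P by (simp add: psd_def)
  show "complex_of_real r \<cdot>\<^sub>m A \<in> carrier_mat n n" using A by simp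
  fix v :: "complex vec" assume v: "v \<in> carrier_vec n"
  have "qf (complex_of_real r \<cdot>\<^sub>m A) v = complex_of_real (r * Re (qf A v))"
    unfolding qf_smult[OF A v] using psd_qf(1)[OF P v] by (metis of_real_mult)
  then show "Im (qf (complex_of_real r \<cdot>\<^sub>m A) v) = 0 \<and> Re (qf (complex_of_real r \<cdot>\<^sub>m A) v) \<ge> 0"
    using psd_qf(2)[OF P v] r by simp
qed



lemma mv3: fixes A B C :: "complex mat" assumes "A \<in> carrier_mat n n" "B \<in> carrier_mat n n" "C \<in> carrier_mat n n" "v \<in> carrier_vec n"
  shows "(A * B * C) *\<^sub>v v = A *\<^sub>v (B *\<^sub>v (C *\<^sub>v v))"
proof -
  have "(A * B * C) *\<^sub>v v = (A * B) *\<^sub>v (C *\<^sub>v v)"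
    by (rule assoc_mult_mat_vec[of _ n n _ n]) (use assms in auto)
  also have "\<dots> = A *\<^sub>v (B *\<^sub>v (C *\<^sub>v v))"
    by (rule assoc_mult_mat_vec[of _ n n _ n]) (use assms in auto)
  finally show ?thesis .
qed

lemma cs_expand: fixes p q a z :: "complex vec" assumes "p \<in> carrier_vec n" "q \<in> carrier_vec n" "a \<in> carrier_vec n" "z \<in> carrier_vec n"
  shows "(p + q) \<bullet>c (a + z) = p \<bullet>c a + p \<bullet>c z + q \<bullet>c a + q \<bullet>c z"
proof -
  have ca: "conjugate a \<in> carrier_vec n" "conjugate z \<in> carrier_vec n" using assms by auto
  have "(p + q) \<bullet>c (a + z) = (p + q) \<bullet> (conjugate a + conjugate z)"
    using conjugate_add_vec[OF assms(3,4)] by simp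
  also have "\<dots> = (p + q) \<bullet> conjugate a + (p + q) \<bullet> conjugate z"
    by (rule scalar_prod_add_distrib[of _ n]) (use assms ca in auto)
  also have "(p + q) \<bullet> conjugate a = p \<bullet> conjugate a + q \<bullet> conjugate a"
    by (rule add_scalar_prod_distrib[of _ n]) (use assms ca in auto)
  also have "(p + q) \<bullet> conjugate z = p \<bullet> conjugate z + q \<bullet> conjugate z"
    by (rule add_scalar_prod_distrib[of _ n]) (use assms ca in auto)
  finally show ?thesis by (simp add: algebra_simps)
qed

lemma key2:
  assumes C: "C \<in> carrier_mat n n" and hC: "adj C = C"
    and pC: "\<And>z. z \<in> carrier_vec n \<Longrightarrow> Re (qf C z) \<ge> 0"
    and fx: "\<And>k. k < n \<Longrightarrow> J k \<Longrightarrow> C *\<^sub>v unit_vec n k = unit_vec n k"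
    and y: "y \<in> carrier_vec n"
  shows "Re (qf C y) \<ge> (\<Sum>k<n. if J k then (cmod (y $ k))^2 else 0)"
proof -
  define a where "a = vec n (\<lambda>k. if J k then y $ k else 0)"
  define z where "z = vec n (\<lambda>k. if J k then 0 else y $ k)"
  have a: "a \<in> carrier_vec n" and z: "z \<in> carrier_vec n" unfolding a_def z_def by auto
  have yaz: "y = a + z" using y by (intro eq_vecI) (auto simp: a_def z_def)
  have Cik: "C $$ (i,k) = (if i = k then 1 else 0)" if "i < n" "k < n" "J k" for i k
  proof -
    have "col C k = unit_vec n k" using fx[OF that(2,3)] mult_unit_vec[OF C that(2)] by simp
    then have "col C k $ i = unit_vec n k $ i" by simp
    then show ?thesis using C that by simp
  qed
  have Ca: "C *\<^sub>v a = a"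
  proof (rule eq_vecI)
    fix i assume "i < dim_vec a"
    then have i: "i < n" using a by simp
    have "(C *\<^sub>v a) $ i = (\<Sum>k<n. C $$ (i,k) * a $ k)"
      using C a i by (auto simp: scalar_prod_def atLeast0LessThan intro!: sum.cong)
    also have "\<dots> = (\<Sum>k<n. if k = i then (if J k then y $ k else 0) else 0)"
      by (rule sum.cong) (use Cik i in \<open>auto simp: a_def\<close>)
    also have "\<dots> = a $ i" using i by (simp add: a_def)
    finally show "(C *\<^sub>v a) $ i = a $ i" .
  qed (use C a in auto)
  have az: "a \<bullet>c z = 0" and za: "z \<bullet>c a = 0"
    unfolding a_def z_def by (auto simp: scalar_prod_def intro!: sum.neutral)
  have Cz: "C *\<^sub>v z \<in> carrier_vec n" using C z by simp
  have Cza: "(C *\<^sub>v z) \<bullet>c a = 0"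
    using adj_cscalar[OF C z a] unfolding hC Ca za by simp
  have "C *\<^sub>v (a + z) = C *\<^sub>v a + C *\<^sub>v z" by (rule mult_add_distrib_mat_vec[OF C a z])
  then have "qf C y = (a + C *\<^sub>v z) \<bullet>c (a + z)"
    unfolding qf_def yaz Ca by simp
  also have "\<dots> = a \<bullet>c a + qf C z"
    unfolding cs_expand[OF a Cz a z] az Cza qf_def by simp
  finally have e: "qf C y = a \<bullet>c a + qf C z" .
  have "Re (a \<bullet>c a) = (\<Sum>k<n. if J k then (cmod (y $ k))^2 else 0)"
  proof -
    have "a \<bullet>c a = (\<Sum>k<n. if J k then y $ k * cnj (y $ k) else 0)"
      unfolding a_def by (auto simp: scalar_prod_def atLeast0LessThan intro!: sum.cong)
    also have "\<dots> = complex_of_real (\<Sum>k<n. if J k then (cmod (y $ k))^2 else 0)"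
      unfolding of_real_sum by (rule sum.cong) (auto simp: complex_norm_square[symmetric])
    finally show ?thesis by simp
  qed
  then show ?thesis using e pC[OF z] by simp
qed


declare minus_carrier_mat[simp]

lemma key:
  assumes Ps: "psd n \<sigma>" and tr: "mtrace \<sigma> = 1"
    and ev: "\<forall>e. eigenvalue \<sigma> e \<longrightarrow> Re e \<le> \<alpha>"
    and P: "psd n P" and IP: "psd n (1\<^sub>m n - P)" and tP: "mtrace (\<sigma> * P) = 1"
  shows "psd n (complex_of_real \<alpha> \<cdot>\<^sub>m P - \<sigma>)"
proof -
  have S: "\<sigma> \<in> carrier_mat n n" using Ps by (simp add: psd_def)
  have Pc: "P \<in> carrier_mat n n" using P by (simp add: psd_def)
  obtain U r where U: "U \<in> carrier_mat n n" and UU: "adj U * U = 1\<^sub>m n"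
    and Sd: "\<sigma> = U * dmat n (\<lambda>k. complex_of_real (r k)) * adj U" and rpos: "\<forall>k<n. r k \<ge> 0"
    using psd_spectral[OF Ps] by blast
  define D where "D = dmat n (\<lambda>k. complex_of_real (r k))"
  have Dc: "D \<in> carrier_mat n n" unfolding D_def by simp
  have UU': "U * adj U = 1\<^sub>m n" by (rule unitary_right[OF U UU])
  have aU: "adj U \<in> carrier_mat n n" using U by simp
  define u where "u k = col U k" for k
  have uc: "u k \<in> carrier_vec n" for k unfolding u_def carrier_vec_def using U by simp
  have ek: "adj U *\<^sub>v u k = unit_vec n k" if k: "k < n" for k
    unfolding u_def using col_mult2[OF aU U k] UU k by simp
  have Uek: "U *\<^sub>v unit_vec n k = u k" if k: "k < n" for k
    unfolding u_def by (rule mult_unit_vec[OF U k])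
  have uu: "u k \<bullet>c u k = 1" if k: "k < n" for k
    unfolding u_def using adj_mult_index[OF U k k] UU k by simp
  have tf: "mtrace (\<sigma> * X) = (\<Sum>k<n. complex_of_real (r k) * qf X (u k))" if X: "X \<in> carrier_mat n n" for X
    unfolding Sd u_def by (rule trace_spec[OF U X])
  have sumr: "(\<Sum>k<n. r k) = 1"
  proof -
    have "mtrace (\<sigma> * 1\<^sub>m n) = 1" using tr S by simp
    then have "(\<Sum>k<n. complex_of_real (r k) * qf (1\<^sub>m n) (u k)) = 1" using tf[of "1\<^sub>m n"] by simp
    then have "(\<Sum>k<n. complex_of_real (r k)) = 1"
      using qf_one[OF uc] uu by simp
    then show ?thesis by (metis of_real_eq_1_iff of_real_sum)
  qed
  have rle: "r k \<le> \<alpha>" if k: "k < n" for k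
  proof -
    have Dek: "D *\<^sub>v unit_vec n k = complex_of_real (r k) \<cdot>\<^sub>v unit_vec n k"
      unfolding D_def using k by (subst dmat_mult_vec) (auto intro!: eq_vecI simp: unit_vec_def)
    have "\<sigma> *\<^sub>v u k = U *\<^sub>v (D *\<^sub>v (adj U *\<^sub>v u k))"
      unfolding Sd D_def[symmetric] by (rule mv3[OF U Dc aU uc])
    also have "\<dots> = complex_of_real (r k) \<cdot>\<^sub>v u k"
      unfolding ek[OF k] Dek using mult_mat_vec[OF U unit_vec_carrier] Uek[OF k] by simp
    finally have e: "\<sigma> *\<^sub>v u k = complex_of_real (r k) \<cdot>\<^sub>v u k" .
    have "u k \<noteq> 0\<^sub>v n" using uu[OF k] by auto
    then have "eigenvalue \<sigma> (complex_of_real (r k))"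
      unfolding eigenvalue_def eigenvector_def using e uc S by auto
    then show ?thesis using ev by auto
  qed
  have apos: "\<alpha> > 0"
  proof (rule ccontr)
    assume "\<not> \<alpha> > 0"
    then have "\<forall>k<n. r k \<le> 0" using rle by fastforce
    then have "(\<Sum>k<n. r k) \<le> 0" by (intro sum_nonpos) auto
    then show False using sumr by simp
  qed
  define B where "B = 1\<^sub>m n - P"
  have Bc: "B \<in> carrier_mat n n" unfolding B_def using Pc by simp
  have qB: "qf B (u k) = 1 - qf P (u k)" if k: "k < n" for k
    unfolding B_def using qf_minus[of "1\<^sub>m n" n P "u k"] Pc uc qf_one[OF uc] uu[OF k] by simp
  have "(\<Sum>k<n. complex_of_real (r k) * qf B (u k)) = 
     (\<Sum>k<n. complex_of_real (r k)) - (\<Sum>k<n. complex_of_real (r k) * qf P (u k))"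
    by (simp add: qB right_diff_distrib sum_subtractf)
  also have "\<dots> = 0" using sumr tf[OF Pc] tP by (metis of_real_1 of_real_sum right_minus_eq)
  finally have s0: "(\<Sum>k<n. complex_of_real (r k) * qf B (u k)) = 0" .
  have qBr: "qf B (u k) = complex_of_real (Re (qf B (u k)))" "Re (qf B (u k)) \<ge> 0" for k
    using psd_qf[OF IP[folded B_def] uc] by auto
  have e: "complex_of_real (\<Sum>k<n. r k * Re (qf B (u k))) = (\<Sum>k<n. complex_of_real (r k) * qf B (u k))"
    unfolding of_real_sum of_real_mult by (simp only: qBr(1)[symmetric])
  have "(\<Sum>k<n. r k * Re (qf B (u k))) = 0"
    by (rule of_real_eq_0_iff[THEN iffD1]) (use e s0 in simp)
  then have z: "r k * Re (qf B (u k)) = 0" if "k < n" for k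
    using sum_nonneg_eq_0_iff[of "{..<n}" "\<lambda>k. r k * Re (qf B (u k))"] rpos qBr(2) that by simp
  have Pu: "P *\<^sub>v u k = u k" if k: "k < n" and rk: "r k > 0" for k
  proof -
    have "qf B (u k) = 0" using z[OF k] rk qBr[of k] by simp
    then have "B *\<^sub>v u k = 0\<^sub>v n" by (rule psd_qf0[OF IP[folded B_def] uc])
    moreover have "B *\<^sub>v u k = u k - P *\<^sub>v u k"
      unfolding B_def using minus_mult_distrib_mat_vec[of "1\<^sub>m n" n n P "u k"] Pc uc by simp
    ultimately have "u k - P *\<^sub>v u k = 0\<^sub>v n" by simp
    note d = this
    have dimu: "dim_vec (u k) = n" using uc[of k] by simp
    show ?thesis
    proof (rule eq_vecI)
      fix i assume "i < dim_vec (u k)"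
      then have i: "i < n" using dimu by simp
      have "(u k - P *\<^sub>v u k) $ i = 0" using d i by simp
      then have "u k $ i - (P *\<^sub>v u k) $ i = 0" using i Pc by simp
      then show "(P *\<^sub>v u k) $ i = u k $ i" by simp
    qed (use Pc dimu in simp)
  qed
  define C where "C = adj U * P * U"
  have Cc: "C \<in> carrier_mat n n" unfolding C_def using mult_carrier_mat[OF mult_carrier_mat[OF aU Pc] U] .
  have hP: "adj P = P" by (rule psd_herm[OF P])
  have hC: "adj C = C"
  proof -
    have "adj C = adj U * adj (adj U * P)" unfolding C_def
      by (rule adj_mult[of _ n n _ n]) (use aU Pc U in auto)
    also have "adj (adj U * P) = P * U" using adj_mult[OF aU Pc] hP by simp
    finally show ?thesis unfolding C_def using aU Pc U by (simp add: assoc_mult_mat[of _ n n _ n _ n])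
  qed
  have qC: "qf C z = qf P (U *\<^sub>v z)" if z: "z \<in> carrier_vec n" for z
  proof -
    have "C *\<^sub>v z = adj U *\<^sub>v (P *\<^sub>v (U *\<^sub>v z))" unfolding C_def by (rule mv3[OF aU Pc U z])
    moreover have "(adj U *\<^sub>v (P *\<^sub>v (U *\<^sub>v z))) \<bullet>c z = (P *\<^sub>v (U *\<^sub>v z)) \<bullet>c (U *\<^sub>v z)"
      using adj_cscalar[OF aU _ z, of "P *\<^sub>v (U *\<^sub>v z)"] Pc U z by simp
    ultimately show ?thesis unfolding qf_def by simp
  qed
  have pC: "Re (qf C z) \<ge> 0" if z: "z \<in> carrier_vec n" for z
    unfolding qC[OF z] by (rule psd_qf(2)[OF P]) (use U z in simp)
  have fx: "C *\<^sub>v unit_vec n k = unit_vec n k" if k: "k < n" and rk: "r k > 0" for k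
  proof -
    have "C *\<^sub>v unit_vec n k = adj U *\<^sub>v (P *\<^sub>v (U *\<^sub>v unit_vec n k))"
      unfolding C_def by (rule mv3[OF aU Pc U unit_vec_carrier])
    also have "\<dots> = unit_vec n k" unfolding Uek[OF k] Pu[OF k rk] ek[OF k] ..
    finally show ?thesis .
  qed
  show ?thesis
  proof (rule psdI)
    show "complex_of_real \<alpha> \<cdot>\<^sub>m P - \<sigma> \<in> carrier_mat n n" using Pc S by simp
    fix x :: "complex vec" assume x: "x \<in> carrier_vec n"
    define y where "y = adj U *\<^sub>v x"
    have y: "y \<in> carrier_vec n" unfolding y_def using aU x by simp
    have xy: "U *\<^sub>v y = x"
    proof -
      have "U *\<^sub>v y = (U * adj U) *\<^sub>v x" unfolding y_def
        by (rule assoc_mult_mat_vec[symmetric, of _ n n _ n]) (use U aU x in auto)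
      then show ?thesis unfolding UU' using x by simp
    qed
    have qS: "qf \<sigma> x = complex_of_real (\<Sum>k<n. r k * (cmod (y $ k))^2)"
      unfolding Sd y_def by (rule qf_coords_real[OF U x])
    have qP: "qf P x = qf C y" using qC[OF y] xy by simp
    have k2: "Re (qf C y) \<ge> (\<Sum>k<n. if r k > 0 then (cmod (y $ k))^2 else 0)"
      by (rule key2[OF Cc hC pC fx y])
    have qPr: "qf P x = complex_of_real (Re (qf P x))" using psd_qf(1)[OF P x] .
    have M: "qf (complex_of_real \<alpha> \<cdot>\<^sub>m P - \<sigma>) x = complex_of_real \<alpha> * qf P x - qf \<sigma> x"
      using qf_minus[of "complex_of_real \<alpha> \<cdot>\<^sub>m P" n \<sigma> x] qf_smult[OF Pc x] Pc S x by simp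
    have "(\<Sum>k<n. r k * (cmod (y $ k))^2) \<le> (\<Sum>k<n. \<alpha> * (if r k > 0 then (cmod (y $ k))^2 else 0))"
    proof (rule sum_mono)
      fix k assume "k \<in> {..<n}"
      then have k: "k < n" by simp
      show "r k * (cmod (y $ k))^2 \<le> \<alpha> * (if r k > 0 then (cmod (y $ k))^2 else 0)"
      proof (cases "r k > 0")
        case True
        then show ?thesis using rle[OF k] by (simp add: mult_right_mono)
      next
        case False
        then have "r k = 0" using rpos k by force
        then show ?thesis by simp
      qed
    qed
    also have "\<dots> = \<alpha> * (\<Sum>k<n. if r k > 0 then (cmod (y $ k))^2 else 0)"
      by (simp add: sum_distrib_left)
    also have "\<dots> \<le> \<alpha> * Re (qf P x)" using k2 qP apos by (simp add: mult_left_mono)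
    finally have ineq: "(\<Sum>k<n. r k * (cmod (y $ k))^2) \<le> \<alpha> * Re (qf P x)" .
    define a where "a = Re (qf P x)"
    have qa: "qf P x = complex_of_real a" unfolding a_def by (rule qPr)
    have ineq': "(\<Sum>k<n. r k * (cmod (y $ k))^2) \<le> \<alpha> * a" using ineq unfolding a_def .
    show "Im (qf (complex_of_real \<alpha> \<cdot>\<^sub>m P - \<sigma>) x) = 0 \<and> Re (qf (complex_of_real \<alpha> \<cdot>\<^sub>m P - \<sigma>) x) \<ge> 0"
      unfolding M qS qa using ineq' by simp
  qed
qed



lemma trace_psd_real: assumes Ps: "psd n \<sigma>" and X: "psd n X"
  shows "mtrace (\<sigma> * X) = complex_of_real (Re (mtrace (\<sigma> * X)))"
proof -
  obtain U r where U: "U \<in> carrier_mat n n" and UU: "adj U * U = 1\<^sub>m n"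
    and Sd: "\<sigma> = U * dmat n (\<lambda>k. complex_of_real (r k)) * adj U" and rpos: "\<forall>k<n. r k \<ge> 0"
    using psd_spectral[OF Ps] by blast
  have Xc: "X \<in> carrier_mat n n" using X by (simp add: psd_def)
  have cU: "col U k \<in> carrier_vec n" for k using U unfolding carrier_vec_def by simp
  have "mtrace (\<sigma> * X) = (\<Sum>k<n. complex_of_real (r k) * qf X (col U k))"
    unfolding Sd by (rule trace_spec[OF U Xc])
  also have "\<dots> = complex_of_real (\<Sum>k<n. r k * Re (qf X (col U k)))"
    unfolding of_real_sum of_real_mult by (simp only: psd_qf(1)[OF X cU, symmetric])
  finally show ?thesis by simp
qed

lemma smult_smult_c: "(a::complex) \<cdot>\<^sub>m (b \<cdot>\<^sub>m A) = (a * b) \<cdot>\<^sub>m A"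
  by (rule eq_matI) auto

lemma smult_one_c: "(1::complex) \<cdot>\<^sub>m A = A"
  by (rule eq_matI) auto

theorem mainTheorem9:
  fixes ds :: "nat list" and \<sigma> :: "complex mat" and \<alpha> :: real
  assumes "density ds \<sigma>"
    and "eigenvalue \<sigma> (complex_of_real \<alpha>)"
    and "\<forall>e. eigenvalue \<sigma> e \<longrightarrow> Re e \<le> \<alpha>"
  shows "d_val ds \<sigma> \<ge> (1 + global_robustness ds \<sigma>) / \<alpha>"
proof -
  define n where "n = total_dim ds"
  have Ps: "psd n \<sigma>" and tr: "mtrace \<sigma> = 1" using assms(1) by (simp_all add: density_def n_def)
  have S: "\<sigma> \<in> carrier_mat n n" using Ps by (simp add: psd_def)
  define Rset where "Rset = {t. t \<ge> 0 \<and> (\<exists>\<rho>. density ds \<rho> \<and>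
      sep_density ds ((1 / complex_of_real (1 + t)) \<cdot>\<^sub>m (\<sigma> + complex_of_real t \<cdot>\<^sub>m \<rho>)))}"
  have R: "global_robustness ds \<sigma> = Inf Rset" by (simp add: global_robustness_def Rset_def)
  have bdd: "bdd_below Rset" unfolding Rset_def by (rule bdd_belowI[of _ 0]) auto
  define cond where "cond Pm \<longleftrightarrow> psd n Pm \<and> separable ds Pm \<and> Re (mtrace (\<sigma> * Pm)) > 0 \<and>
      psd n ((1 / mtrace (\<sigma> * Pm)) \<cdot>\<^sub>m Pm) \<and>
      psd n (1\<^sub>m n - (1 / mtrace (\<sigma> * Pm)) \<cdot>\<^sub>m Pm)" for Pm
  have D: "d_val ds \<sigma> = Inf {Re (mtrace Pm) / Re (mtrace (\<sigma> * Pm)) | Pm. cond Pm}"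
    by (simp add: d_val_def cond_def n_def)
  have claim: "(1 + Inf Rset) / \<alpha> \<le> Re (mtrace Pm) / Re (mtrace (\<sigma> * Pm))" if cP: "cond Pm" for Pm
  proof -
    have PmP: "psd n Pm" and sepPm: "separable ds Pm" and cpos: "Re (mtrace (\<sigma> * Pm)) > 0"
      and PP: "psd n ((1 / mtrace (\<sigma> * Pm)) \<cdot>\<^sub>m Pm)"
      and IPP: "psd n (1\<^sub>m n - (1 / mtrace (\<sigma> * Pm)) \<cdot>\<^sub>m Pm)" using cP unfolding cond_def by auto
    have Pmc: "Pm \<in> carrier_mat n n" using PmP by (simp add: psd_def)
    define c where "c = mtrace (\<sigma> * Pm)"
    define \<gamma> where "\<gamma> = Re c"
    have cg: "c = complex_of_real \<gamma>" unfolding c_def \<gamma>_def by (rule trace_psd_real[OF Ps PmP])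
    have gpos: "\<gamma> > 0" using cpos unfolding \<gamma>_def c_def .
    have c0: "c \<noteq> 0" using cg gpos by simp
    define P where "P = (1 / c) \<cdot>\<^sub>m Pm"
    have Pc: "P \<in> carrier_mat n n" unfolding P_def using Pmc by simp
    have P: "psd n P" using PP unfolding P_def c_def .
    have IP: "psd n (1\<^sub>m n - P)" using IPP unfolding P_def c_def .
    have tP: "mtrace (\<sigma> * P) = 1"
    proof -
      have "\<sigma> * P = (1 / c) \<cdot>\<^sub>m (\<sigma> * Pm)" unfolding P_def by (rule mult_smult_distrib[OF S Pmc])
      then have "mtrace (\<sigma> * P) = (1 / c) * c" unfolding c_def
        using mtrace_smult[of "\<sigma> * Pm" n] S Pmc by simp
      then show ?thesis using c0 by simp
    qed
    define M where "M = complex_of_real \<alpha> \<cdot>\<^sub>m P - \<sigma>"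
    have Mc: "M \<in> carrier_mat n n" unfolding M_def using Pc S by simp
    have MP: "psd n M" unfolding M_def by (rule key[OF Ps tr assms(3) P IP tP])
    define tp where "tp = Re (mtrace P)"
    have tpe: "mtrace P = complex_of_real tp" unfolding tp_def by (rule psd_trace(1)[OF P])
    have tp0: "tp \<ge> 0" unfolding tp_def by (rule psd_trace(2)[OF P])
    define t0 where "t0 = \<alpha> * tp - 1"
    have trM: "mtrace M = complex_of_real t0"
      unfolding M_def t0_def using mtrace_minus[of "complex_of_real \<alpha> \<cdot>\<^sub>m P" n \<sigma>] mtrace_smult[OF Pc] Pc S tr tpe
      by simp
    have t00: "t0 \<ge> 0" using psd_trace(2)[OF MP] trM by simp
    have apos: "\<alpha> > 0"
    proof (rule ccontr)
      assume "\<not> \<alpha> > 0"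
      then have "\<alpha> * tp \<le> 0" using tp0 by (simp add: mult_nonpos_nonneg)
      then show False using t00 unfolding t0_def by simp
    qed
    have trPm: "mtrace Pm = complex_of_real (\<gamma> * tp)"
    proof -
      have "mtrace P = (1 / c) * mtrace Pm" unfolding P_def by (rule mtrace_smult[OF Pmc])
      then have "mtrace Pm = c * mtrace P" using c0 by (simp add: field_simps)
      then show ?thesis unfolding cg tpe by simp
    qed
    have val: "Re (mtrace Pm) / Re (mtrace (\<sigma> * Pm)) = tp"
      unfolding trPm c_def[symmetric] \<gamma>_def[symmetric] using gpos by simp
    define \<rho> where "\<rho> = (if t0 > 0 then complex_of_real (1 / t0) \<cdot>\<^sub>m M else \<sigma>)"
    have sumeq: "\<sigma> + complex_of_real t0 \<cdot>\<^sub>m \<rho> = complex_of_real \<alpha> \<cdot>\<^sub>m P"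
    proof (cases "t0 > 0")
      case True
      have "complex_of_real t0 \<cdot>\<^sub>m \<rho> = M" unfolding \<rho>_def using True
        by (simp add: smult_smult_c smult_one_c flip: of_real_mult)
      then show ?thesis unfolding M_def using S Pc by (auto intro!: eq_matI)
    next
      case False
      then have "t0 = 0" using t00 by simp
      then have "M = 0\<^sub>m n n" using psd_trace0[OF MP] trM by simp
      note M0 = this
      have "complex_of_real \<alpha> \<cdot>\<^sub>m P = \<sigma>"
      proof (rule eq_matI)
        fix i j assume "i < dim_row \<sigma>" "j < dim_col \<sigma>"
        then have i: "i < n" and j: "j < n" using S by auto
        have "M $$ (i,j) = 0" using M0 i j by simp
        then show "(complex_of_real \<alpha> \<cdot>\<^sub>m P) $$ (i,j) = \<sigma> $$ (i,j)"
          unfolding M_def using S Pc i j by simp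
      qed (use S Pc in auto)
      note aPs = this
      have r: "\<rho> = \<sigma>" unfolding \<rho>_def using False by simp
      have "\<sigma> + complex_of_real t0 \<cdot>\<^sub>m \<rho> = \<sigma>" unfolding r \<open>t0 = 0\<close> using S by (auto intro!: eq_matI)
      then show ?thesis using aPs by simp
    qed
    have dens_rho: "density ds \<rho>"
    proof (cases "t0 > 0")
      case True
      have "psd n \<rho>" unfolding \<rho>_def using True psd_smult[OF MP, of "1 / t0"] by simp
      moreover have "mtrace \<rho> = 1" unfolding \<rho>_def using True mtrace_smult[OF Mc] trM
        by (simp flip: of_real_mult)
      ultimately show ?thesis unfolding density_def n_def by simp
    next
      case False
      then show ?thesis unfolding \<rho>_def using assms(1) by simp
    qed
    define \<kappa> where "\<kappa> = \<alpha> / ((1 + t0) * \<gamma>)"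
    have tpn: "tp \<noteq> 0" using t00 unfolding t0_def by auto
    have k0: "\<kappa> \<ge> 0" unfolding \<kappa>_def using apos gpos t00 by simp
    have Xeq: "(1 / complex_of_real (1 + t0)) \<cdot>\<^sub>m (\<sigma> + complex_of_real t0 \<cdot>\<^sub>m \<rho>) = complex_of_real \<kappa> \<cdot>\<^sub>m Pm"
      unfolding sumeq P_def cg \<kappa>_def using t00 gpos
      by (auto intro!: eq_matI simp: field_simps)
    have "sep_density ds (complex_of_real \<kappa> \<cdot>\<^sub>m Pm)"
    proof -
      have "psd n (complex_of_real \<kappa> \<cdot>\<^sub>m Pm)" by (rule psd_smult[OF PmP k0])
      moreover have "mtrace (complex_of_real \<kappa> \<cdot>\<^sub>m Pm) = 1"
      proof -
        have "mtrace (complex_of_real \<kappa> \<cdot>\<^sub>m Pm) = complex_of_real (\<kappa> * (\<gamma> * tp))"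
          using mtrace_smult[OF Pmc] trPm by simp
        also have "\<kappa> * (\<gamma> * tp) = 1" unfolding \<kappa>_def t0_def using gpos apos tp0 t00 tpn
          unfolding t0_def by (simp add: field_simps)
        finally show ?thesis by simp
      qed
      moreover have "separable ds (complex_of_real \<kappa> \<cdot>\<^sub>m Pm)" by (rule sep_scale[OF sepPm k0])
      ultimately show ?thesis unfolding sep_density_def density_def n_def by simp
    qed
    then have "t0 \<in> Rset" unfolding Rset_def using t00 dens_rho Xeq by auto
    then have "Inf Rset \<le> t0" by (rule cInf_lower[OF _ bdd])
    then have "(1 + Inf Rset) / \<alpha> \<le> (1 + t0) / \<alpha>" using apos by (simp add: divide_right_mono)
    also have "(1 + t0) / \<alpha> = tp" unfolding t0_def using apos by simp
    finally show ?thesis unfolding val .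
  qed
  have ne: "cond (1\<^sub>m n)"
  proof -
    have t1: "mtrace (\<sigma> * 1\<^sub>m n) = 1" using S tr by simp
    have z: "1\<^sub>m n - 1\<^sub>m n = (0\<^sub>m n n :: complex mat)" by (rule eq_matI) auto
    have "psd n (0\<^sub>m n n)"
    proof (rule psdI)
      fix v :: "complex vec" assume v: "v \<in> carrier_vec n"
      have "qf (0\<^sub>m n n) v = 0" using qf_sum[of "0\<^sub>m n n" n v] v by simp
      then show "Im (qf (0\<^sub>m n n) v) = 0 \<and> Re (qf (0\<^sub>m n n) v) \<ge> 0" by simp
    qed simp
    then show ?thesis unfolding cond_def t1 using psd_one sep_one[of ds] unfolding n_def
      by (simp add: smult_one_c z[unfolded n_def])
  qed
  have "(1 + Inf Rset) / \<alpha> \<le> d_val ds \<sigma>"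
    unfolding D by (rule cInf_greatest) (use ne claim in auto)
  then show ?thesis unfolding R .
qed


end
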